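(* Let $d$ be a positive integer and $n=2^d$. Let $G=\mathrm{Circ}(a_0,\ldots,a_{n-1})$ be a Hermitian circulant with universal perfect state transfer. Then $a_j\neq 0$ for all $j=1,\ldots,n-1$.
   Context: $\mathrm{Circ}(a_0,\ldots,a_{n-1})$ denotes the $n\times n$ matrix $C$ with $C_{j,k}=a_{k-j}$ (indices mod $n$). A graph with Hermitian adjacency matrix $A$ has universal perfect state transfer if for every pair of vertices $v,w$ there is $t>0$ with $|\langle w|e^{-\mathtt{i} At}|v\rangle|=1$. *)

theory Defs
  imports "HOL-Analysis.Analysis"
begin

text \<open>n x n complex matrices are represented as functions nat => nat => complex,
  only entries with indices below n being relevant; vertices are 0..n-1.\<close>

definition circ :: "nat \<Rightarrow> (nat \<Rightarrow> complex) \<Rightarrow> nat \<Rightarrow> nat \<Rightarrow> complex" where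
  "circ n a j k = a ((k + n - j) mod n)"

definition hermitian_mat :: "nat \<Rightarrow> (nat \<Rightarrow> nat \<Rightarrow> complex) \<Rightarrow> bool" where
  "hermitian_mat n A \<longleftrightarrow> (\<forall>j<n. \<forall>k<n. A k j = cnj (A j k))"

definition mat_mult :: "nat \<Rightarrow> (nat \<Rightarrow> nat \<Rightarrow> complex) \<Rightarrow> (nat \<Rightarrow> nat \<Rightarrow> complex)
    \<Rightarrow> nat \<Rightarrow> nat \<Rightarrow> complex" where
  "mat_mult n A B j k = (\<Sum>l<n. A j l * B l k)"

fun mat_pow :: "nat \<Rightarrow> (nat \<Rightarrow> nat \<Rightarrow> complex) \<Rightarrow> nat \<Rightarrow> nat \<Rightarrow> nat \<Rightarrow> complex" where
  "mat_pow n A 0 = (\<lambda>j k. if j = k then 1 else 0)"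
| "mat_pow n A (Suc m) = mat_mult n A (mat_pow n A m)"

definition mat_exp :: "nat \<Rightarrow> (nat \<Rightarrow> nat \<Rightarrow> complex) \<Rightarrow> nat \<Rightarrow> nat \<Rightarrow> complex" where
  "mat_exp n A j k = (\<Sum>m. mat_pow n A m j k / of_nat (fact m))"

definition transition :: "nat \<Rightarrow> (nat \<Rightarrow> nat \<Rightarrow> complex) \<Rightarrow> real \<Rightarrow> nat \<Rightarrow> nat \<Rightarrow> complex" where
  "transition n A t = mat_exp n (\<lambda>j k. - (\<i> * of_real t) * A j k)"

definition universal_pst :: "nat \<Rightarrow> (nat \<Rightarrow> nat \<Rightarrow> complex) \<Rightarrow> bool" where
  "universal_pst n A \<longleftrightarrow>
     (\<forall>v<n. \<forall>w<n. v \<noteq> w \<longrightarrow> (\<exists>t>0. cmod (transition n A t w v) = 1))"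

end

theory Submission
  imports Defs "Jordan_Normal_Form.Determinant" "HOL-Library.Z2"
begin


definition Lspan :: "complex \<Rightarrow> nat \<Rightarrow> complex set" where
  "Lspan \<eta> M = {z. \<exists>c::nat\<Rightarrow>int. z = (\<Sum>r<M. of_int (c r) * \<eta>^r)}"

lemma Lspan_I: "z = (\<Sum>r<M. of_int (c r) * \<eta>^r) \<Longrightarrow> z \<in> Lspan \<eta> M"
  unfolding Lspan_def by blast

lemma Lspan_add: "z \<in> Lspan \<eta> M \<Longrightarrow> w \<in> Lspan \<eta> M \<Longrightarrow> z + w \<in> Lspan \<eta> M"
proof -
  assume "z \<in> Lspan \<eta> M" "w \<in> Lspan \<eta> M"
  then obtain c c' where "z = (\<Sum>r<M. of_int (c r) * \<eta>^r)" "w = (\<Sum>r<M. of_int (c' r) * \<eta>^r)"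
    unfolding Lspan_def by blast
  then have "z + w = (\<Sum>r<M. of_int (c r + c' r) * \<eta>^r)"
    by (simp add: sum.distrib distrib_right)
  then show ?thesis by (rule Lspan_I)
qed

lemma Lspan_smult: "z \<in> Lspan \<eta> M \<Longrightarrow> of_int k * z \<in> Lspan \<eta> M"
proof -
  assume "z \<in> Lspan \<eta> M"
  then obtain c where "z = (\<Sum>r<M. of_int (c r) * \<eta>^r)"
    unfolding Lspan_def by blast
  then have "of_int k * z = (\<Sum>r<M. of_int (k * c r) * \<eta>^r)"
    by (simp add: sum_distrib_left mult.assoc)
  then show ?thesis by (rule Lspan_I)
qed

lemma Lspan_minus: "z \<in> Lspan \<eta> M \<Longrightarrow> - z \<in> Lspan \<eta> M"
  using Lspan_smult[of z \<eta> M "-1"] by simp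

lemma Lspan_diff: "z \<in> Lspan \<eta> M \<Longrightarrow> w \<in> Lspan \<eta> M \<Longrightarrow> z - w \<in> Lspan \<eta> M"
  using Lspan_add[of z \<eta> M "-w"] Lspan_minus[of w] by simp

lemma Lspan_int: assumes "M > 0" shows "of_int k \<in> Lspan \<eta> M"
proof -
  have "(\<Sum>r<M. of_int (if r = 0 then k else 0) * \<eta>^r) = (\<Sum>r<M. if r = 0 then of_int k else 0)"
    by (rule sum.cong) auto
  also have "\<dots> = of_int k" using assms by (simp add: sum.delta)
  finally show ?thesis by (rule Lspan_I[OF sym])
qed

lemma Lspan_eta:
  assumes "\<eta>^M = -1" "z \<in> Lspan \<eta> M" shows "\<eta> * z \<in> Lspan \<eta> M"
proof -
  from assms(2) obtain c where z: "z = (\<Sum>r<M. of_int (c r) * \<eta>^r)"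
    unfolding Lspan_def by blast
  show ?thesis
  proof (cases M)
    case 0
    then show ?thesis using z unfolding Lspan_def by auto
  next
    case (Suc M')
    define c' where "c' r = (if r = 0 then - c M' else c (r - 1))" for r
    have "\<eta> * z = (\<Sum>r<M. of_int (c r) * \<eta>^Suc r)"
      using z by (simp add: sum_distrib_left algebra_simps)
    also have "\<dots> = (\<Sum>r<M'. of_int (c r) * \<eta>^Suc r) + of_int (c M') * \<eta>^M"
      using Suc by simp
    also have "\<dots> = (\<Sum>r<M'. of_int (c' (Suc r)) * \<eta>^Suc r) + of_int (c' 0) * \<eta>^0"
      using assms(1) by (simp add: c'_def)
    also have "\<dots> = (\<Sum>r<M. of_int (c' r) * \<eta>^r)"
      unfolding Suc sum.lessThan_Suc_shift by simp
    finally show ?thesis by (rule Lspan_I)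
  qed
qed

lemma Lspan_eta_pow:
  assumes "\<eta>^M = -1" "z \<in> Lspan \<eta> M" shows "\<eta>^k * z \<in> Lspan \<eta> M"
  by (induction k) (use assms Lspan_eta in \<open>auto simp: mult.assoc\<close>)

lemma Lspan_mult:
  assumes "\<eta>^M = -1" "z \<in> Lspan \<eta> M" "w \<in> Lspan \<eta> M" shows "w * z \<in> Lspan \<eta> M"
proof -
  from assms(3) obtain c where w: "w = (\<Sum>r<M. of_int (c r) * \<eta>^r)"
    unfolding Lspan_def by blast
  have "(\<Sum>r<K. of_int (c r) * (\<eta>^r * z)) \<in> Lspan \<eta> M" for K
  proof (induction K)
    case 0
    then show ?case unfolding Lspan_def by (auto intro: exI[of _ "\<lambda>_. 0"])
  next
    case (Suc K)
    then show ?case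
      by (simp add: Lspan_add Lspan_smult Lspan_eta_pow assms)
  qed
  moreover have "w * z = (\<Sum>r<M. of_int (c r) * (\<eta>^r * z))"
    using w by (simp add: sum_distrib_right mult.assoc)
  ultimately show ?thesis by simp
qed

lemma Lspan_power:
  assumes "\<eta>^M = -1" "M > 0" "z \<in> Lspan \<eta> M" shows "z^k \<in> Lspan \<eta> M"
proof (induction k)
  case 0
  then show ?case using Lspan_int[OF assms(2), of 1] by simp
next
  case (Suc k)
  then show ?case using Lspan_mult[OF assms(1) Suc assms(3)] by (simp add: mult.commute)
qed

lemma Lspan_eta_in: assumes "\<eta>^M = -1" "M > 0" shows "\<eta>^k \<in> Lspan \<eta> M"
  using Lspan_eta_pow[OF assms(1) Lspan_int[OF assms(2), of 1], of k] by simp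

lemma half_not_in_Lspan:
  assumes eta: "\<eta>^M = -1" and M: "M > 0" and h: "h \<in> Lspan \<eta> M" and h2: "2 * h = 1"
  shows False
proof -
  have "\<forall>i\<in>{..<M}. \<exists>c. h * \<eta>^i = (\<Sum>r<M. of_int (c r) * \<eta>^r)"
    using Lspan_mult[OF eta h Lspan_eta_in[OF eta M]] unfolding Lspan_def
    by (auto simp: mult.commute)
  then obtain C where C: "\<And>i. i < M \<Longrightarrow> h * \<eta>^i = (\<Sum>r<M. of_int (C i r) * \<eta>^r)"
    by (metis bchoice lessThan_iff)
  define Bm :: "int mat" where "Bm = mat M M (\<lambda>(i,j). 2 * C i j - (if i = j then 1 else 0))"
  define Bc :: "complex mat" where "Bc = map_mat of_int Bm"
  define v :: "complex vec" where "v = vec M (\<lambda>j. \<eta>^j)"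
  have Bc: "Bc \<in> carrier_mat M M" unfolding Bc_def Bm_def by simp
  have v: "v \<in> carrier_vec M" unfolding v_def by simp
  have v0: "v \<noteq> 0\<^sub>v M"
  proof
    assume "v = 0\<^sub>v M"
    then have "v $ 0 = 0" using M by simp
    then show False using M unfolding v_def by simp
  qed
  have Bv: "Bc *\<^sub>v v = 0\<^sub>v M"
  proof (rule eq_vecI)
    show "dim_vec (Bc *\<^sub>v v) = dim_vec (0\<^sub>v M)" using Bc by simp
  next
    fix i assume "i < dim_vec (0\<^sub>v M)"
    then have i: "i < M" by simp
    have "(Bc *\<^sub>v v) $ i = (\<Sum>j<M. of_int (2 * C i j - (if i = j then 1 else 0)) * \<eta>^j)"
      using i Bc unfolding Bc_def Bm_def v_def
      by (simp add: scalar_prod_def atLeast0LessThan)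
    also have "\<dots> = 2 * (\<Sum>j<M. of_int (C i j) * \<eta>^j) - (\<Sum>j<M. (if i = j then \<eta>^j else 0))"
    proof -
      have "(\<Sum>j<M. of_int (2 * C i j - (if i = j then 1 else 0)) * \<eta>^j)
          = (\<Sum>j<M. 2 * (of_int (C i j) * \<eta>^j) - (if i = j then \<eta>^j else 0))"
        by (rule sum.cong) (auto simp: algebra_simps)
      then show ?thesis by (simp add: sum_subtractf sum_distrib_left)
    qed
    also have "\<dots> = 2 * (h * \<eta>^i) - \<eta>^i"
      using i C[OF i] by (simp add: sum.delta)
    also have "\<dots> = 0" using h2 by (simp add: mult.assoc[symmetric])
    finally show "(Bc *\<^sub>v v) $ i = 0\<^sub>v M $ i" using i by simp
  qed
  have "det Bc = 0"
    using det_0_iff_vec_prod_zero[OF Bc] v v0 Bv by blast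
  then have dB: "det Bm = 0"
    unfolding Bc_def by simp
  have "map_mat (of_int :: int \<Rightarrow> bit) Bm = 1\<^sub>m M"
    by (rule eq_matI) (auto simp: Bm_def)
  then have "det (map_mat (of_int :: int \<Rightarrow> bit) Bm) = 1" by simp
  then have "(of_int (det Bm) :: bit) = 1" by simp
  then show False using dB by simp
qed

lemma odd_relation_impossible:
  fixes \<eta> :: complex and Ocf :: "nat \<Rightarrow> int"
  assumes eta: "\<eta>^M = -1" and M: "M = 2^m"
    and odd: "\<And>r. r < M \<Longrightarrow> odd (Ocf r)"
    and rel: "(\<Sum>r<M. of_int (Ocf r) * \<eta>^r) = 0"
  shows False
proof -
  have M0: "M > 0" using M by simp
  define E where "E r = (Ocf r - 1) div 2" for r
  have OE: "Ocf r = 2 * E r + 1" if "r < M" for r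
    using odd[OF that] unfolding E_def by (auto elim!: oddE)
  define S where "S = (\<Sum>r<M. \<eta>^r)"
  define e where "e = (\<Sum>r<M. of_int (E r) * \<eta>^r)"
  have eL: "e \<in> Lspan \<eta> M" unfolding e_def by (rule Lspan_I) (rule refl)
  have "(1 - \<eta>) * S = 1 - \<eta>^M" unfolding S_def by (simp add: one_diff_power_eq)
  then have S2: "(1 - \<eta>) * S = 2" using eta by simp
  have "0 = (\<Sum>r<M. of_int (Ocf r) * \<eta>^r)" using rel by simp
  also have "\<dots> = (\<Sum>r<M. 2 * (of_int (E r) * \<eta>^r) + \<eta>^r)"
    by (rule sum.cong) (auto simp: OE algebra_simps)
  also have "\<dots> = 2 * e + S" unfolding e_def S_def by (simp add: sum.distrib sum_distrib_left)
  finally have "S = - 2 * e" by (simp add: algebra_simps eq_neg_iff_add_eq_0)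
  with S2 have "2 * ((1 - \<eta>) * (- e)) = 2 * 1" by (simp add: algebra_simps)
  then have "(1 - \<eta>) * (- e) = 1" by (rule mult_left_cancel[THEN iffD1, rotated]) simp
  define u where "u = - e"
  have uL: "u \<in> Lspan \<eta> M" unfolding u_def using eL by (rule Lspan_minus)
  have u1: "(1 - \<eta>) * u = 1" using \<open>(1 - \<eta>) * (- e) = 1\<close> unfolding u_def .
  have pw: "\<exists>B\<in>Lspan \<eta> M. (1 - \<eta>)^(2^k) = (1 - \<eta>^(2^k)) + 2 * B" for k
  proof (induction k)
    case 0
    then show ?case using Lspan_int[OF M0, of 0] by auto
  next
    case (Suc k)
    then obtain B where BL: "B \<in> Lspan \<eta> M" and B: "(1 - \<eta>)^(2^k) = (1 - \<eta>^(2^k)) + 2 * B" by blast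
    define z where "z = \<eta>^(2^k)"
    have zz: "\<eta>^(2^Suc k) = z * z" unfolding z_def by (simp add: power_add[symmetric] mult_2)
    have zL: "z \<in> Lspan \<eta> M" unfolding z_def by (rule Lspan_eta_in[OF eta M0])
    define B' where "B' = z * z - z + 2 * (B * (1 - z)) + 2 * (B * B)"
    have one: "1 \<in> Lspan \<eta> M" using Lspan_int[OF M0, of 1] by simp
    have two: "\<And>x. x \<in> Lspan \<eta> M \<Longrightarrow> 2 * x \<in> Lspan \<eta> M" using Lspan_smult[of _ \<eta> M 2] by simp
    have B'L: "B' \<in> Lspan \<eta> M" unfolding B'_def
      by (intro Lspan_add Lspan_diff Lspan_mult[OF eta] two zL BL one)
    have "(1 - \<eta>)^(2^Suc k) = ((1 - \<eta>)^(2^k))^2" by (simp add: power_mult[symmetric] mult.commute)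
    also have "\<dots> = (1 - \<eta>^(2^Suc k)) + 2 * B'"
      unfolding B zz B'_def z_def[symmetric] by (simp add: power2_eq_square algebra_simps)
    finally show ?case using B'L by blast
  qed
  obtain B where BL: "B \<in> Lspan \<eta> M" and B: "(1 - \<eta>)^M = (1 - \<eta>^M) + 2 * B"
    using pw[of m] M by blast
  have "1 = ((1 - \<eta>) * u)^M" using u1 by simp
  also have "\<dots> = (1 - \<eta>)^M * u^M" by (simp add: power_mult_distrib)
  also have "\<dots> = 2 * ((1 + B) * u^M)" using B eta by (simp add: algebra_simps)
  finally have h2: "2 * ((1 + B) * u^M) = 1" by simp
  have hL: "(1 + B) * u^M \<in> Lspan \<eta> M"
    by (intro Lspan_mult[OF eta] Lspan_power[OF eta M0 uL] Lspan_add BL)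
       (use Lspan_int[OF M0, of 1] in simp)
  show False using half_not_in_Lspan[OF eta M0 hL h2] .
qed




lemma sum_lessThan_add_split:
  fixes g :: "nat \<Rightarrow> 'a::comm_monoid_add"
  shows "(\<Sum>k<a+b. g k) = (\<Sum>k<a. g k) + (\<Sum>r<b. g (a + r))"
  by (induction b) (simp_all add: add.assoc)

lemma sum_blocks:
  fixes g :: "nat \<Rightarrow> 'a::comm_monoid_add"
  shows "(\<Sum>k<M*Q. g k) = (\<Sum>q<Q. \<Sum>r<M. g (r + M*q))"
proof (induction Q)
  case 0 then show ?case by simp
next
  case (Suc Q)
  have "(\<Sum>k<M*Suc Q. g k) = (\<Sum>k<M*Q + M. g k)" by (simp add: add.commute)
  also have "\<dots> = (\<Sum>k<M*Q. g k) + (\<Sum>r<M. g (M*Q + r))" by (rule sum_lessThan_add_split)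
  finally show ?case using Suc by (simp add: add.commute)
qed

lemma alt_sum_int: "(\<Sum>q<2*P. (-1::int)^q * (int r + int M * int q)) = - int M * int P"
proof (induction P)
  case 0 then show ?case by simp
next
  case (Suc P)
  have "(\<Sum>q<2*Suc P. (-1::int)^q * (int r + int M * int q))
      = (\<Sum>q<2*P. (-1::int)^q * (int r + int M * int q))
        + (-1)^(2*P) * (int r + int M * int (2*P)) + (-1)^(Suc (2*P)) * (int r + int M * int (Suc (2*P)))"
    by simp
  also have "\<dots> = - int M * int P - int M" using Suc by (simp add: algebra_simps)
  finally show ?case by (simp add: algebra_simps)
qed

lemma block_sum_nonzero:
  fixes \<zeta> :: complex and mm :: "nat \<Rightarrow> int"
  assumes zeta: "\<zeta>^M = -1" and M: "M = 2^m" and P: "P > 0" and n: "n = M * (2 * P)"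
  shows "(\<Sum>k<n. of_int (int k - int n * mm k) * \<zeta>^k) \<noteq> 0"
proof
  assume H: "(\<Sum>k<n. of_int (int k - int n * mm k) * \<zeta>^k) = 0"
  define Ocf where "Ocf r = 1 + 2 * (\<Sum>q<2*P. (-1::int)^q * mm (r + M*q))" for r
  have pw: "\<zeta>^(r + M*q) = (-1)^q * \<zeta>^r" for r q
    by (simp add: power_add power_mult zeta)
  have pw': "\<zeta>^(r + q*M) = (-1)^q * \<zeta>^r" for r q
    using pw[of r q] by (simp add: mult.commute)
  have "(\<Sum>k<n. of_int (int k - int n * mm k) * \<zeta>^k)
      = (\<Sum>q<2*P. \<Sum>r<M. of_int (int (r + M*q) - int n * mm (r + M*q)) * \<zeta>^(r + M*q))"
    unfolding n by (rule sum_blocks)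
  also have "\<dots> = (\<Sum>r<M. \<Sum>q<2*P. of_int ((-1)^q * (int r + int M * int q) - int n * ((-1)^q * mm (r + M*q))) * \<zeta>^r)"
    by (subst sum.swap) (auto intro!: sum.cong simp: pw pw' algebra_simps)
  also have "\<dots> = (\<Sum>r<M. of_int (\<Sum>q<2*P. ((-1)^q * (int r + int M * int q) - int n * ((-1)^q * mm (r + M*q)))) * \<zeta>^r)"
    by (simp add: sum_distrib_right)
  also have "\<dots> = (\<Sum>r<M. of_int (- (int M * int P) * Ocf r) * \<zeta>^r)"
  proof (rule sum.cong[OF refl])
    fix r
    have "(\<Sum>q<2*P. ((-1::int)^q * (int r + int M * int q) - int n * ((-1)^q * mm (r + M*q))))
        = - (int M * int P) - int n * (\<Sum>q<2*P. (-1::int)^q * mm (r + M*q))"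
      by (simp only: sum_subtractf alt_sum_int sum_distrib_left[symmetric])
    also have "\<dots> = - (int M * int P) * Ocf r" unfolding Ocf_def n by (simp add: algebra_simps)
    finally show "of_int (\<Sum>q<2*P. ((-1)^q * (int r + int M * int q) - int n * ((-1)^q * mm (r + M*q)))) * \<zeta>^r
        = of_int (- (int M * int P) * Ocf r) * \<zeta>^r" by (simp only:)
  qed
  also have "\<dots> = - of_int (int M * int P) * (\<Sum>r<M. of_int (Ocf r) * \<zeta>^r)"
    by (simp add: sum_distrib_left algebra_simps)
  finally have "(\<Sum>r<M. of_int (Ocf r) * \<zeta>^r) = 0" using H P M by simp
  moreover have "odd (Ocf r)" for r unfolding Ocf_def by simp
  ultimately show False using odd_relation_impossible[OF zeta M] by blast
qed




definition rt :: "nat \<Rightarrow> int \<Rightarrow> complex" where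
  "rt n x = exp (2 * of_real pi * \<i> * of_int x / of_nat n)"

lemma rt_add: "rt n (x + y) = rt n x * rt n y"
  unfolding rt_def by (simp add: exp_add[symmetric] add_divide_distrib algebra_simps)

lemma rt_zero[simp]: "rt n 0 = 1" unfolding rt_def by simp

lemma rt_mult_n: assumes "n > 0" shows "rt n (int n * t) = 1"
  unfolding rt_def exp_eq_1 using assms by (auto intro!: exI[of _ t] simp: field_simps)

lemma rt_mod: assumes "n > 0" "x mod int n = y mod int n" shows "rt n x = rt n y"
proof -
  from assms(2) obtain t where "x = y + int n * t"
    by (metis mod_eqE mult.commute)
  then show ?thesis using rt_add rt_mult_n[OF assms(1)] by simp
qed

lemma rt_pow: "rt n x ^ k = rt n (int k * x)"
  unfolding rt_def by (simp add: exp_of_nat_mult[symmetric] algebra_simps)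

lemma rt_eq_1: assumes "n > 0" "rt n x = 1" shows "int n dvd x"
proof -
  have "exp (2 * of_real pi * \<i> * of_int x / of_nat n) = 1" using assms(2) unfolding rt_def .
  then obtain m :: int where "Im (2 * of_real pi * \<i> * of_int x / of_nat n) = of_int (2 * m) * pi"
    unfolding exp_eq_1 by blast
  then have "2 * pi * of_int x / of_nat n = of_int (2 * m) * pi" by simp
  then have "of_int x = (of_int (int n * m) :: real)" using assms(1) pi_gt_zero
    by (simp add: field_simps)
  then have "x = int n * m" by linarith
  then show ?thesis by simp
qed

lemma rt_orth: assumes "n > 0"
  shows "(\<Sum>k<n. rt n (int k * x)) = (if int n dvd x then of_nat n else 0)"
proof (cases "int n dvd x")
  case True
  then obtain t where x: "x = int n * t" by blast
  have "rt n (int k * x) = 1" for k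
    using rt_mult_n[OF assms, of "int k * t"] by (simp add: x algebra_simps)
  then show ?thesis using True by simp
next
  case False
  define q where "q = rt n x"
  have q1: "q \<noteq> 1" using rt_eq_1[OF assms] False unfolding q_def by blast
  have "(1 - q) * (\<Sum>k<n. q^k) = 1 - q^n" by (simp add: one_diff_power_eq)
  also have "q^n = 1" unfolding q_def rt_pow using rt_mult_n[OF assms, of x] by simp
  finally have "(\<Sum>k<n. q^k) = 0" using q1 by simp
  then show ?thesis using False unfolding q_def rt_pow by simp
qed

definition lam :: "nat \<Rightarrow> (nat \<Rightarrow> complex) \<Rightarrow> nat \<Rightarrow> complex" where
  "lam n b k = (\<Sum>p<n. b p * rt n (- (int k * int p)))"

lemma int_mod_helper: "(- (k * (x mod m))) mod m = (- (k * x)) mod (m::int)"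
  by (metis mod_minus_eq mod_mult_right_eq)

lemma mod_shift1: fixes p n j :: nat assumes "p < n" "j < n" shows "((p + j) mod n + n - j) mod n = p"
proof (cases "p + j < n")
  case True
  then have "(p + j) mod n = p + j" by (rule mod_less)
  moreover have "p + j + n - j = p + n" by simp
  ultimately show ?thesis using assms by simp
next
  case False
  then have "(p + j) mod n = (p + j - n) mod n" by (simp add: le_mod_geq)
  also have "\<dots> = p + j - n" using assms by (intro mod_less) linarith
  finally have e: "(p + j) mod n = p + j - n" .
  have "p + j - n + n - j = p" using False by linarith
  then show ?thesis unfolding e using assms(1) by simp
qed

lemma mod_shift2: fixes q n j :: nat assumes "q < n" "j < n" shows "((q + n - j) mod n + j) mod n = q"
proof (cases "j \<le> q")
  case True
  then have "q + n - j = (q - j) + n" by linarith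
  then have "(q + n - j) mod n = (q - j) mod n" by simp
  also have "\<dots> = q - j" using assms by (intro mod_less) linarith
  finally have e: "(q + n - j) mod n = q - j" .
  have "q - j + j = q" using True by linarith
  then show ?thesis unfolding e using assms(1) by simp
next
  case False
  then have e: "(q + n - j) mod n = q + n - j" using assms by (intro mod_less) linarith
  have "q + n - j + j = q + n" using False assms by linarith
  then show ?thesis unfolding e using assms(1) by simp
qed

lemma shift_sum:
  assumes "n > 0" "j < n"
  shows "(\<Sum>q<n. b ((q + n - j) mod n) * rt n (- (int k * int q))) = rt n (- (int k * int j)) * lam n b k"
proof -
  have "(\<Sum>q<n. b ((q + n - j) mod n) * rt n (- (int k * int q)))
      = (\<Sum>p<n. b p * rt n (- (int k * int ((p + j) mod n))))"
  proof (rule sum.reindex_bij_witness[of _ "\<lambda>p. (p + j) mod n" "\<lambda>q. (q + n - j) mod n"])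
    fix p assume "p \<in> {..<n}"
    then show "((p + j) mod n + n - j) mod n = p" using assms mod_shift1 by simp
  next
    fix p assume "p \<in> {..<n}"
    then show "(p + j) mod n \<in> {..<n}" using assms by simp
  next
    fix q assume "q \<in> {..<n}"
    then show "((q + n - j) mod n + j) mod n = q" using assms mod_shift2 by simp
  next
    fix q assume "q \<in> {..<n}"
    then show "(q + n - j) mod n \<in> {..<n}" using assms by simp
  next
    fix q assume "q \<in> {..<n}"
    then show "b ((q + n - j) mod n) * rt n (- (int k * int ((((q + n - j) mod n) + j) mod n)))
        = b ((q + n - j) mod n) * rt n (- (int k * int q))"
      using assms mod_shift2[of q n j] by simp
  qed
  also have "\<dots> = (\<Sum>p<n. b p * (rt n (- (int k * int j)) * rt n (- (int k * int p))))"
  proof (rule sum.cong[OF refl])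
    fix p
    have "rt n (- (int k * int ((p + j) mod n))) = rt n (- (int k * int j) + - (int k * int p))"
    proof (rule rt_mod[OF assms(1)])
      have "(- (int k * int ((p + j) mod n))) mod int n = (- (int k * (int p + int j))) mod int n"
        using int_mod_helper[of "int k" "int p + int j" "int n"] by (simp add: of_nat_mod)
      then show "(- (int k * int ((p + j) mod n))) mod int n = (- (int k * int j) + - (int k * int p)) mod int n"
        by (simp add: algebra_simps)
    qed
    then show "b p * rt n (- (int k * int ((p + j) mod n))) = b p * (rt n (- (int k * int j)) * rt n (- (int k * int p)))"
      by (simp only: rt_add)
  qed
  also have "\<dots> = rt n (- (int k * int j)) * lam n b k"
    unfolding lam_def by (simp add: sum_distrib_left algebra_simps)
  finally show ?thesis .
qed

lemma dvd_small_diff: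
  assumes "p < n" "j < n" shows "int n dvd (int j - int p) \<longleftrightarrow> j = p"
proof
  assume "int n dvd (int j - int p)"
  then obtain t where t: "int j - int p = int n * t" by blast
  show "j = p"
  proof (rule ccontr)
    assume "j \<noteq> p"
    then have "t \<noteq> 0" using t by auto
    then have "1 \<le> \<bar>t\<bar>" by linarith
    then have "int n * 1 \<le> int n * \<bar>t\<bar>" by (intro mult_left_mono) simp_all
    then have "\<bar>int n * t\<bar> \<ge> int n" by (simp add: abs_mult)
    moreover have "\<bar>int j - int p\<bar> < int n" using assms by auto
    ultimately show False using t by simp
  qed
qed simp

lemma circ_pow:
  assumes n: "n > 0"
  shows "j < n \<Longrightarrow> l < n \<Longrightarrow> mat_pow n (circ n b) m j l
     = (\<Sum>k<n. (lam n b k)^m * rt n (int k * (int l - int j))) / of_nat n"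
proof (induction m arbitrary: j l)
  case 0
  have "(\<Sum>k<n. rt n (int k * (int l - int j))) = (if int n dvd (int l - int j) then of_nat n else 0)"
    by (rule rt_orth[OF n])
  moreover have "int n dvd (int l - int j) \<longleftrightarrow> l = j"
    by (rule dvd_small_diff[OF 0(1) 0(2)])
  ultimately show ?case using n by simp
next
  case (Suc m)
  have "mat_pow n (circ n b) (Suc m) j l
      = (\<Sum>q<n. b ((q + n - j) mod n) * ((\<Sum>k<n. (lam n b k)^m * rt n (int k * (int l - int q))) / of_nat n))"
  proof -
    have "mat_pow n (circ n b) (Suc m) j l = (\<Sum>q<n. circ n b j q * mat_pow n (circ n b) m q l)"
      by (simp add: mat_mult_def)
    also have "\<dots> = (\<Sum>q<n. b ((q + n - j) mod n) * ((\<Sum>k<n. (lam n b k)^m * rt n (int k * (int l - int q))) / of_nat n))"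
    proof (rule sum.cong[OF refl])
      fix q assume "q \<in> {..<n}"
      then have q: "q < n" by simp
      show "circ n b j q * mat_pow n (circ n b) m q l = b ((q + n - j) mod n) * ((\<Sum>k<n. (lam n b k)^m * rt n (int k * (int l - int q))) / of_nat n)"
        unfolding Suc.IH[OF q Suc.prems(2)] circ_def ..
    qed
    finally show ?thesis .
  qed
  also have "\<dots> = (\<Sum>k<n. (lam n b k)^m * rt n (int k * int l) *
        (\<Sum>q<n. b ((q + n - j) mod n) * rt n (- (int k * int q)))) / of_nat n"
  proof -
    have sp: "rt n (int k * (int l - int q)) = rt n (int k * int l) * rt n (- (int k * int q))" for k q
      using rt_add[of n "int k * int l" "- (int k * int q)"] by (simp add: algebra_simps)
    have sp2: "rt n (int k * int l - int k * int q) = rt n (int k * int l) * rt n (- (int k * int q))" for k q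
      using sp[of k q] by (simp add: algebra_simps)
    have "(\<Sum>q<n. b ((q + n - j) mod n) * ((\<Sum>k<n. (lam n b k)^m * rt n (int k * (int l - int q))) / of_nat n))
       = (\<Sum>q<n. \<Sum>k<n. b ((q + n - j) mod n) * ((lam n b k)^m * rt n (int k * (int l - int q)))) / of_nat n"
      by (simp add: sum_divide_distrib sum_distrib_left)
    also have "\<dots> = (\<Sum>k<n. \<Sum>q<n. b ((q + n - j) mod n) * ((lam n b k)^m * rt n (int k * (int l - int q)))) / of_nat n"
      by (subst sum.swap) (rule refl)
    also have "\<dots> = (\<Sum>k<n. (lam n b k)^m * rt n (int k * int l) *
        (\<Sum>q<n. b ((q + n - j) mod n) * rt n (- (int k * int q)))) / of_nat n"
      by (rule arg_cong[where f="\<lambda>x. x / of_nat n"], rule sum.cong[OF refl])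
         (simp only: sp sum_distrib_left mult_ac)
    finally show ?thesis .
  qed
  also have "\<dots> = (\<Sum>k<n. (lam n b k)^m * rt n (int k * int l) * (rt n (- (int k * int j)) * lam n b k)) / of_nat n"
    by (simp only: shift_sum[OF n Suc.prems(1)])
  also have "\<dots> = (\<Sum>k<n. (lam n b k)^Suc m * rt n (int k * (int l - int j))) / of_nat n"
  proof -
    have e: "rt n (int k * (int l - int j)) = rt n (int k * int l) * rt n (- (int k * int j))" for k
      using rt_add[of n "int k * int l" "- (int k * int j)"] by (simp add: algebra_simps)
    show ?thesis
      by (rule arg_cong[where f="\<lambda>x. x / of_nat n"], rule sum.cong[OF refl])
         (simp only: e power_Suc mult_ac)
  qed
  finally show ?case .
qed

lemma circ_exp:
  assumes n: "n > 0" and j: "j < n" and l: "l < n"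
  shows "mat_exp n (circ n b) j l = (\<Sum>k<n. exp (lam n b k) * rt n (int k * (int l - int j))) / of_nat n"
proof -
  define c where "c k = rt n (int k * (int l - int j)) / of_nat n" for k
  have eq: "mat_pow n (circ n b) m j l / of_nat (fact m) = (\<Sum>k<n. c k * ((lam n b k)^m /\<^sub>R fact m))" for m
    unfolding circ_pow[OF n j l] c_def
    by (simp add: sum_divide_distrib scaleR_conv_of_real divide_inverse sum_distrib_left algebra_simps)
  have "(\<lambda>m. \<Sum>k<n. c k * ((lam n b k)^m /\<^sub>R fact m)) sums (\<Sum>k<n. c k * exp (lam n b k))"
    by (intro sums_sum sums_mult exp_converges)
  then have "mat_exp n (circ n b) j l = (\<Sum>k<n. c k * exp (lam n b k))"
    unfolding mat_exp_def eq by (rule sums_unique[symmetric])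
  then show ?thesis unfolding c_def by (simp add: sum_divide_distrib algebra_simps)
qed




lemma lam_scale: "lam n (\<lambda>p. c * a p) k = c * lam n a k"
  unfolding lam_def by (simp add: sum_distrib_left algebra_simps)

lemma trans_formula:
  assumes n: "n > 0" and w: "w < n" and v: "v < n"
  shows "transition n (circ n a) t w v
    = (\<Sum>k<n. exp (- (\<i> * of_real t) * lam n a k) * rt n (int k * (int v - int w))) / of_nat n"
proof -
  have "(\<lambda>j k. - (\<i> * of_real t) * circ n a j k) = circ n (\<lambda>p. - (\<i> * of_real t) * a p)"
    by (intro ext) (simp add: circ_def)
  then have "transition n (circ n a) t w v = mat_exp n (circ n (\<lambda>p. - (\<i> * of_real t) * a p)) w v"
    unfolding transition_def by simp
  also have "\<dots> = (\<Sum>k<n. exp (lam n (\<lambda>p. - (\<i> * of_real t) * a p) k) * rt n (int k * (int v - int w))) / of_nat n"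
    by (rule circ_exp[OF n w v])
  finally show ?thesis by (simp only: lam_scale)
qed

lemma cnj_rt: "cnj (rt n x) = rt n (- x)"
  unfolding rt_def exp_cnj by simp

lemma lam_real:
  assumes n: "n > 0" and H: "hermitian_mat n (circ n a)"
  shows "cnj (lam n a k) = lam n a k"
proof -
  have ca: "cnj (a p) = a ((n - p) mod n)" if p: "p < n" for p
  proof -
    have "circ n a p 0 = cnj (circ n a 0 p)" using H p n unfolding hermitian_mat_def by blast
    then show ?thesis using p unfolding circ_def by simp
  qed
  have inv: "(n - (n - p) mod n) mod n = p" if "p < n" for p
  proof (cases "p = 0")
    case True then show ?thesis by simp
  next
    case False
    then have e: "(n - p) mod n = n - p" using that by (intro mod_less) linarith
    have "n - (n - p) = p" using that by linarith
    then show ?thesis unfolding e using that by simp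
  qed
  have "cnj (lam n a k) = (\<Sum>p<n. a ((n - p) mod n) * rt n (int k * int p))"
    unfolding lam_def by (simp add: cnj_rt ca)
  also have "\<dots> = (\<Sum>q<n. a q * rt n (int k * int ((n - q) mod n)))"
  proof (rule sum.reindex_bij_witness[of _ "\<lambda>q. (n - q) mod n" "\<lambda>q. (n - q) mod n"])
    fix q assume "q \<in> {..<n}" then show "(n - (n - q) mod n) mod n = q" using inv by simp
  next
    fix q assume "q \<in> {..<n}" then show "(n - q) mod n \<in> {..<n}" using n by simp
  next
    fix q assume "q \<in> {..<n}" then show "(n - (n - q) mod n) mod n = q" using inv by simp
  next
    fix q assume "q \<in> {..<n}" then show "(n - q) mod n \<in> {..<n}" using n by simp
  next
    fix q assume q: "q \<in> {..<n}"
    then show "a ((n - q) mod n) * rt n (int k * int ((n - (n - q) mod n) mod n)) = a ((n - q) mod n) * rt n (int k * int q)"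
      using inv by simp
  qed
  also have "\<dots> = lam n a k"
    unfolding lam_def
  proof (rule sum.cong[OF refl])
    fix q assume q: "q \<in> {..<n}"
    have "rt n (int k * int ((n - q) mod n)) = rt n (- (int k * int q))"
    proof (rule rt_mod[OF n])
      have e1: "int ((n - q) mod n) = (int n - int q) mod int n" using q by (simp add: of_nat_mod of_nat_diff)
      have f1: "(int k * int ((n - q) mod n)) mod int n = (int k * (int n - int q)) mod int n"
        unfolding e1 by (rule mod_mult_right_eq)
      have f2: "int k * (int n - int q) = - (int k * int q) + int n * int k" by (simp add: algebra_simps)
      have f3: "(- (int k * int q) + int n * int k) mod int n = (- (int k * int q)) mod int n"
        by (rule mod_mult_self2)
      show "(int k * int ((n - q) mod n)) mod int n = (- (int k * int q)) mod int n"
        by (simp only: f1 f2 f3)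
    qed
    then show "a q * rt n (int k * int ((n - q) mod n)) = a q * rt n (- (int k * int q))" by simp
  qed
  finally show ?thesis .
qed

lemma norm_rt: "cmod (rt n x) = 1"
  unfolding rt_def norm_exp_eq_Re by simp

lemma all_equal:
  fixes z :: "nat \<Rightarrow> complex"
  assumes n: "n > 0" and z1: "\<And>k. k < n \<Longrightarrow> cmod (z k) = 1"
    and S1: "cmod ((\<Sum>k<n. z k) / of_nat n) = 1"
  shows "k < n \<Longrightarrow> z k = (\<Sum>k<n. z k) / of_nat n"
proof -
  define c where "c = (\<Sum>k<n. z k) / of_nat n"
  have c1: "cmod c = 1" using S1 unfolding c_def .
  have cc': "c * cnj c = 1" using complex_norm_square[of c] c1 by simp
  have cc: "cnj c * c = 1" using cc' by (simp only: mult.commute)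
  have le: "Re (cnj c * z k) \<le> 1" if "k < n" for k
    using complex_Re_le_cmod[of "cnj c * z k"] z1[OF that] c1 by (simp add: norm_mult)
  have "(\<Sum>k<n. Re (cnj c * z k)) = Re (cnj c * (\<Sum>k<n. z k))"
    by (simp add: sum_distrib_left)
  also have "(\<Sum>k<n. z k) = of_nat n * c" unfolding c_def using n by simp
  also have "cnj c * (of_nat n * c) = of_nat n * (cnj c * c)" by (simp only: mult.left_commute)
  also have "\<dots> = of_nat n" using cc by simp
  finally have sumeq: "(\<Sum>k<n. Re (cnj c * z k)) = real n" by simp
  have eq1: "Re (cnj c * z k) = 1" if k: "k < n" for k
  proof (rule ccontr)
    assume "Re (cnj c * z k) \<noteq> 1"
    then have "Re (cnj c * z k) < 1" using le[OF k] by simp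
    then have "(\<Sum>k<n. Re (cnj c * z k)) < (\<Sum>k<n. 1)"
      by (intro sum_strict_mono_ex1) (use le k in auto)
    then show False using sumeq by simp
  qed
  fix k assume k: "k < n"
  define w where "w = cnj c * z k"
  have w1: "cmod w = 1" unfolding w_def using z1[OF k] c1 by (simp add: norm_mult)
  have wr: "Re w = 1" unfolding w_def using eq1[OF k] .
  have "(cmod w)^2 = (Re w)^2 + (Im w)^2" by (simp add: cmod_def)
  then have "Im w = 0" using w1 wr by simp
  then have "w = 1" using wr by (simp add: complex_eq_iff)
  then have "c * (cnj c * z k) = c" unfolding w_def by simp
  then have "(c * cnj c) * z k = c" by (simp only: mult.assoc)
  then show "z k = c" using cc' by simp
qed




lemma inv_dft:
  assumes n: "n > 0" and j: "j < n"
  shows "(\<Sum>k<n. lam n a k * rt n (int k * int j)) = of_nat n * a j"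
proof -
  have "(\<Sum>k<n. lam n a k * rt n (int k * int j)) = (\<Sum>k<n. \<Sum>p<n. a p * rt n (int k * (int j - int p)))"
  proof (rule sum.cong[OF refl])
    fix k
    have "rt n (- (int k * int p)) * rt n (int k * int j) = rt n (int k * (int j - int p))" for p
      using rt_add[of n "- (int k * int p)" "int k * int j"] by (simp add: algebra_simps)
    then show "lam n a k * rt n (int k * int j) = (\<Sum>p<n. a p * rt n (int k * (int j - int p)))"
      unfolding lam_def by (simp add: sum_distrib_right mult.assoc)
  qed
  also have "\<dots> = (\<Sum>p<n. a p * (\<Sum>k<n. rt n (int k * (int j - int p))))"
    by (subst sum.swap) (simp add: sum_distrib_left)
  also have "\<dots> = (\<Sum>p<n. if p = j then a p * of_nat n else 0)"
    by (rule sum.cong[OF refl]) (simp add: rt_orth[OF n] dvd_small_diff[OF _ j])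
  also have "\<dots> = of_nat n * a j" using j by simp
  finally show ?thesis .
qed

lemma two_adic: "j > 0 \<Longrightarrow> \<exists>e j'. j = 2^e * j' \<and> odd (j'::nat)"
proof (induction j rule: less_induct)
  case (less j)
  show ?case
  proof (cases "odd j")
    case True then show ?thesis by (intro exI[of _ 0] exI[of _ j]) simp
  next
    case False
    then have "j div 2 < j" "j div 2 > 0" using less.prems by auto
    then obtain e j' where "j div 2 = 2^e * j'" "odd j'" using less.IH by blast
    then show ?thesis using False by (intro exI[of _ "Suc e"] exI[of _ j']) auto
  qed
qed

lemma rt_half:
  assumes "n = 2^d" "d \<ge> 1" "odd j'"
  shows "rt n (int (2^(d-1)) * int j') = -1"
proof -
  have d2: "(2::real)^d = 2 * 2^(d-1)" using assms(2) by (simp add: power_eq_if)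
  have d2': "(2::nat)^d = 2 * 2^(d-1)" using assms(2) by (simp add: power_eq_if)
  have "2 * of_real pi * \<i> * of_int (int (2^(d-1)) * int j') / of_nat n = of_nat j' * (of_real pi * \<i>)"
    using assms(1) d2 d2' by (simp add: field_simps)
  then have "rt n (int (2^(d-1)) * int j') = exp (pi * \<i>) ^ j'"
    unfolding rt_def by (simp add: exp_of_nat_mult)
  also have "\<dots> = -1" using assms(3) by simp
  finally show ?thesis .
qed

theorem lemma8:
  fixes d n :: nat and a :: "nat \<Rightarrow> complex"
  assumes "d \<ge> 1"
    and "n = 2 ^ d"
    and "hermitian_mat n (circ n a)"
    and "universal_pst n (circ n a)"
  shows "\<forall>j. 1 \<le> j \<and> j \<le> n - 1 \<longrightarrow> a j \<noteq> 0"
proof (intro allI impI)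
  fix j assume jb: "1 \<le> j \<and> j \<le> n - 1"
  have n2: "n \<ge> 2" using assms(1,2)
    by (metis one_le_numeral power_increasing power_one_right)
  then have n: "n > 0" by simp
  have j: "j < n" "j > 0" using jb n by auto
  show "a j \<noteq> 0"
  proof
    assume aj: "a j = 0"
    define lm where "lm k = lam n a k" for k
    have lreal: "Im (lm k) = 0" for k
      using lam_real[OF n assms(3), of k] unfolding lm_def by (simp add: complex_eq_iff)
    have n1: "1 < n" using n2 by simp
    obtain t where t: "t > 0" and tr: "cmod (transition n (circ n a) t 0 1) = 1"
      using assms(4)[unfolded universal_pst_def, rule_format, OF n1 n] by auto
    define z where "z k = exp (- (\<i> * of_real t) * lm k) * rt n (int k)" for k
    have tz: "transition n (circ n a) t 0 1 = (\<Sum>k<n. z k) / of_nat n"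
      using trans_formula[OF n, of 0 1 a t] n2 unfolding z_def lm_def by simp
    have z1: "cmod (z k) = 1" for k
      unfolding z_def norm_mult norm_rt norm_exp_eq_Re using lreal[of k] by simp
    have ae: "z k = (\<Sum>i<n. z i) / of_nat n" if "k < n" for k
      using all_equal[of n z k] n z1 tr[unfolded tz] that by blast
    have zeq: "z k = z 0" if k: "k < n" for k
      by (rule trans[OF ae[OF k] ae[OF n, symmetric]])
    have "\<forall>k<n. \<exists>m::int. lm k = lm 0 + of_real (2 * pi / (t * real n)) * of_int (int k - int n * m)"
    proof (intro allI impI)
      fix k assume k: "k < n"
      have "exp (- (\<i> * of_real t) * lm k + 2 * of_real pi * \<i> * of_int (int k) / of_nat n) = exp (- (\<i> * of_real t) * lm 0)"
        using zeq[OF k] unfolding z_def rt_def exp_add by simp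
      then obtain m :: int where m: "- (\<i> * of_real t) * lm k + 2 * of_real pi * \<i> * of_int (int k) / of_nat n
          = - (\<i> * of_real t) * lm 0 + of_real (of_int (2 * m) * pi) * \<i>"
        unfolding exp_eq by blast
      have "\<i> * (of_real t * (lm k - lm 0)) = \<i> * (2 * of_real pi * of_int (int k) / of_nat n - of_real (of_int (2 * m) * pi))"
        using m by (simp add: algebra_simps)
      then have "of_real t * (lm k - lm 0) = 2 * of_real pi * of_int (int k) / of_nat n - of_real (of_int (2 * m) * pi)"
        by simp
      then have "lm k = lm 0 + of_real (2 * pi / (t * real n)) * of_int (int k - int n * m)"
        using t n by (simp add: field_simps)
      then show "\<exists>m::int. lm k = lm 0 + of_real (2 * pi / (t * real n)) * of_int (int k - int n * m)" by blast
    qed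
    then obtain mm :: "nat \<Rightarrow> int" where mm: "\<And>k. k < n \<Longrightarrow> lm k = lm 0 + of_real (2 * pi / (t * real n)) * of_int (int k - int n * mm k)"
      by metis
    define \<kappa> :: complex where "\<kappa> = of_real (2 * pi / (t * real n))"
    have \<kappa>0: "\<kappa> \<noteq> 0" unfolding \<kappa>_def using t n by simp
    define \<zeta> where "\<zeta> = rt n (int j)"
    have zp: "rt n (int k * int j) = \<zeta>^k" for k unfolding \<zeta>_def rt_pow ..
    have s0: "(\<Sum>k<n. rt n (int k * int j)) = 0"
      using rt_orth[OF n, of "int j"] dvd_small_diff[of 0 n j] j by simp
    have "0 = of_nat n * a j" using aj by simp
    also have "\<dots> = (\<Sum>k<n. lm k * rt n (int k * int j))" unfolding lm_def using inv_dft[OF n j(1)] by simp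
    also have "\<dots> = (\<Sum>k<n. lm 0 * rt n (int k * int j) + \<kappa> * (of_int (int k - int n * mm k) * \<zeta>^k))"
    proof (rule sum.cong[OF refl])
      fix k assume "k \<in> {..<n}"
      then have k: "k < n" by simp
      have "lm k * rt n (int k * int j) = (lm 0 + \<kappa> * of_int (int k - int n * mm k)) * \<zeta>^k"
        unfolding zp \<kappa>_def by (subst mm[OF k]) (rule refl)
      then show "lm k * rt n (int k * int j) = lm 0 * rt n (int k * int j) + \<kappa> * (of_int (int k - int n * mm k) * \<zeta>^k)"
        by (simp only: zp distrib_right mult.assoc)
    qed
    also have "\<dots> = lm 0 * (\<Sum>k<n. rt n (int k * int j)) + \<kappa> * (\<Sum>k<n. of_int (int k - int n * mm k) * \<zeta>^k)"
      by (simp add: sum.distrib sum_distrib_left)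
    finally have S0: "(\<Sum>k<n. of_int (int k - int n * mm k) * \<zeta>^k) = 0"
      using s0 \<kappa>0 by simp
    obtain e j' where je: "j = 2^e * j'" and oj: "odd j'" using two_adic[OF j(2)] by blast
    have "2^e \<le> j" using je oj by (cases j') auto
    then have "(2::nat)^e < 2^d" using j(1) assms(2) by linarith
    then have ed: "e < d" by simp
    define M where "M = (2::nat)^(d - e - 1)"
    define P where "P = (2::nat)^e"
    have dd: "d = (d - e - 1) + Suc e" using ed by simp
    have nMP: "n = M * (2 * P)"
    proof -
      have "n = 2^((d - e - 1) + Suc e)" using assms(2) dd by simp
      also have "\<dots> = 2^(d - e - 1) * 2^(Suc e)" by (rule power_add)
      also have "\<dots> = M * (2 * P)" unfolding M_def P_def by (simp only: power_Suc)
      finally show ?thesis .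
    qed
    have "\<zeta>^M = rt n (int (2^(d-1)) * int j')"
      unfolding \<zeta>_def rt_pow
    proof -
      have d1: "d - 1 = (d - e - 1) + e" using ed by simp
      have "M * j = 2^(d - e - 1) * 2^e * j'" unfolding M_def je by (simp only: mult.assoc)
      also have "\<dots> = 2^(d-1) * j'" unfolding d1 by (simp only: power_add)
      finally have "int (M * j) = int (2^(d-1) * j')" by (rule arg_cong)
      then have "int M * int j = int (2^(d-1)) * int j'" by (simp only: of_nat_mult)
      then show "rt n (int M * int j) = rt n (int (2^(d-1)) * int j')" by simp
    qed
    also have "\<dots> = -1" by (rule rt_half[OF assms(2,1) oj])
    finally have zM: "\<zeta>^M = -1" .
    have P0: "P > 0" unfolding P_def by simp
    have "(\<Sum>k<n. of_int (int k - int n * mm k) * \<zeta>^k) \<noteq> 0"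
      by (rule block_sum_nonzero[OF zM M_def P0 nMP])
    then show False using S0 by contradiction
  qed
qed


end
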